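(* Assume $B$ has full column rank, and let $R\in\mathcal R_{\rm s}^{n_y}$ be such that every eigenvalue of $A_R$ has real part at most $-\alpha_*$ for some $\alpha_*>0$. Let $M_*$ be such that $\|e^{A_Rt}\|_2\le M_*e^{-\alpha_*t}$ for all $t\ge 0$. Let $P_R$ satisfy $A_RP_R+P_RA_R^{\top}+BB^{\top}=0$, and set $E_R=(I-R)C_{\rm m,o}$, $C_{\rm r}=[0,\ C_{\rm m,o}]$. Then $$\frac{\operatorname{tr}\{C_{\rm p}P_RC_{\rm p}^{\top}\}}{\operatorname{tr}\{C_{{\rm r},R}P_RC_{{\rm r},R}^{\top}\}}\le 8\,\frac{M_*^2\,\|A_R\|_2\,\|B\|_2^2}{\sigma_{\min}^2(B)\,\alpha_*}\cdot\frac{\|C_{\rm p}\|_F^2}{\|E_R\|_F^2+\|C_{\rm r}\|_F^2}.$$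
   Context: Data: $A_{\rm p}\in\mathbb R^{n_x\times n_x}$, $B_{\rm p}\in\mathbb R^{n_x\times n_u}$, $B_w,B_{\hat w}\in\mathbb R^{n_x\times n_x}$, $C_{\rm m,o}\in\mathbb R^{n_y\times n_x}$, $C_{\rm p,o}\in\mathbb R^{n_{y_{\rm p}}\times n_x}$, $D_{\rm p,o}\in\mathbb R^{n_{y_{\rm p}}\times n_u}$, $K\in\mathbb R^{n_x\times n_y}$, $L\in\mathbb R^{n_u\times n_x}$, with $(A_{\rm p},B_{\rm p})$ controllable and $(A_{\rm p},C_{\rm m,o})$ observable. For $R\in\mathbb R^{n_y\times n_y}$: $$A_R=\begin{bmatrix}A_{\rm p}+B_{\rm p}L & -B_{\rm p}L\\ K(I-R)C_{\rm m,o} & A_{\rm p}-KC_{\rm m,o}\end{bmatrix},\quad B=\begin{bmatrix}B_w&0\\ B_w&-B_{\hat w}\end{bmatrix},$$ $C_{{\rm r},R}=[(R-I)C_{\rm m,o},\ C_{\rm m,o}]$, $C_{\rm p}=[C_{\rm p,o}+D_{\rm p,o}L,\ -D_{\rm p,o}L]$. $\mathcal R_{\rm s}^{n_y}=\{R: A_R\text{ is Hurwitz}\}$. $\|\cdot\|_2$ is the spectral norm, $\|\cdot\|_F$ the Frobenius norm, $\sigma_{\min}(B)$ the smallest singular value of $B$. *)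

theory Defs
  imports "HOL-Analysis.Analysis"
begin

text \<open>Block matrices. Rows index the outer type, columns the inner type.\<close>
definition blk2 :: "real^'c^'a \<Rightarrow> real^'d^'a \<Rightarrow> real^'c^'b \<Rightarrow> real^'d^'b \<Rightarrow> real^('c+'d)^('a+'b)" where
  "blk2 A11 A12 A21 A22 = (\<chi> i j. case i of
      Inl i' \<Rightarrow> (case j of Inl j' \<Rightarrow> A11$i'$j' | Inr j' \<Rightarrow> A12$i'$j')
    | Inr i' \<Rightarrow> (case j of Inl j' \<Rightarrow> A21$i'$j' | Inr j' \<Rightarrow> A22$i'$j'))"

definition hcat :: "real^'c^'a \<Rightarrow> real^'d^'a \<Rightarrow> real^('c+'d)^'a" where
  "hcat C1 C2 = (\<chi> i j. case j of Inl j' \<Rightarrow> C1$i$j' | Inr j' \<Rightarrow> C2$i$j')"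

definition matpow :: "real^'n^'n \<Rightarrow> nat \<Rightarrow> real^'n^'n" where
  "matpow A k = (((**) A) ^^ k) (mat 1)"

definition mexp :: "real^'n^'n \<Rightarrow> real \<Rightarrow> real^'n^'n" where
  "mexp A t = (\<Sum>k. (t ^ k / fact k) *\<^sub>R matpow A k)"

definition spec_norm :: "real^'n^'m \<Rightarrow> real" where
  "spec_norm A = onorm (\<lambda>x. A *v x)"

definition frob_norm :: "real^'n^'m \<Rightarrow> real" where
  "frob_norm A = sqrt (\<Sum>i\<in>UNIV. \<Sum>j\<in>UNIV. (A$i$j)^2)"

definition eigenvalue :: "real^'n^'n \<Rightarrow> complex \<Rightarrow> bool" where
  "eigenvalue A l \<longleftrightarrow> (\<exists>v::complex^'n. v \<noteq> 0 \<and>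
      (\<chi> i j. complex_of_real (A$i$j)) *v v = l *s v)"

definition hurwitz :: "real^'n^'n \<Rightarrow> bool" where
  "hurwitz A \<longleftrightarrow> (\<forall>l. eigenvalue A l \<longrightarrow> Re l < 0)"

definition sigma_min :: "real^'n^'m \<Rightarrow> real" where
  "sigma_min B = sqrt (Min {l::real. \<exists>v. v \<noteq> 0 \<and> (transpose B ** B) *v v = l *\<^sub>R v})"

definition controllable :: "real^'n^'n \<Rightarrow> real^'u^'n \<Rightarrow> bool" where
  "controllable A B \<longleftrightarrow>
     span (\<Union>k\<in>{..<CARD('n)}. {column j (matpow A k ** B) | j. True}) = UNIV"

definition observable :: "real^'n^'n \<Rightarrow> real^'n^'y \<Rightarrow> bool" where
  "observable A C \<longleftrightarrow> controllable (transpose A) (transpose C)"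

definition A_R :: "real^'x^'x \<Rightarrow> real^'u^'x \<Rightarrow> real^'y^'x \<Rightarrow> real^'x^'u \<Rightarrow> real^'x^'y
    \<Rightarrow> real^'y^'y \<Rightarrow> real^('x+'x)^('x+'x)" where
  "A_R Ap Bp K L Cmo R = blk2 (Ap + Bp ** L) (- (Bp ** L))
      (K ** (mat 1 - R) ** Cmo) (Ap - K ** Cmo)"

definition B_big :: "real^'x^'x \<Rightarrow> real^'x^'x \<Rightarrow> real^('x+'x)^('x+'x)" where
  "B_big Bw Bwh = blk2 Bw 0 Bw (- Bwh)"

definition C_rR :: "real^'x^'y \<Rightarrow> real^'y^'y \<Rightarrow> real^('x+'x)^'y" where
  "C_rR Cmo R = hcat ((R - mat 1) ** Cmo) Cmo"

definition C_p :: "real^'x^'p \<Rightarrow> real^'u^'p \<Rightarrow> real^'x^'u \<Rightarrow> real^('x+'x)^'p" where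
  "C_p Cpo Dpo L = hcat (Cpo + Dpo ** L) (- (Dpo ** L))"

end

theory Submission imports Defs begin

typedef (overloaded) ('n::finite) sqm = "UNIV :: (real^'n^'n) set"
  morphisms mat_of Sqm by auto

setup_lifting type_definition_sqm

lemma sn_bl: "bounded_linear (\<lambda>x. (A::real^'n::finite^'m::finite) *v x)"
  by simp

lemma matrix_eq_mv: "(\<And>x. (A::real^'n::finite^'m::finite) *v x = B *v x) \<Longrightarrow> A = B"
  by (metis matrix_eq)

lemma matrix_add_rdistrib': "((A::real^'n::finite^'n) + B) ** C = A ** C + B ** C"
  by (simp add: matrix_matrix_mult_def vec_eq_iff sum.distrib distrib_right)

instantiation sqm :: (finite) real_vector
begin
lift_definition zero_sqm :: "'a sqm" is 0 .
lift_definition plus_sqm :: "'a sqm \<Rightarrow> 'a sqm \<Rightarrow> 'a sqm" is "(+)" .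
lift_definition minus_sqm :: "'a sqm \<Rightarrow> 'a sqm \<Rightarrow> 'a sqm" is "(-)" .
lift_definition uminus_sqm :: "'a sqm \<Rightarrow> 'a sqm" is "uminus" .
lift_definition scaleR_sqm :: "real \<Rightarrow> 'a sqm \<Rightarrow> 'a sqm" is "scaleR" .
instance
  by standard (transfer; simp add: algebra_simps)+
end

instantiation sqm :: (finite) real_normed_vector
begin
lift_definition norm_sqm :: "'a sqm \<Rightarrow> real" is "\<lambda>A. onorm (\<lambda>x. A *v x)" .
definition sgn_sqm :: "'a sqm \<Rightarrow> 'a sqm" where "sgn_sqm x = x /\<^sub>R norm x"
definition dist_sqm :: "'a sqm \<Rightarrow> 'a sqm \<Rightarrow> real" where "dist_sqm x y = norm (x - y)"
definition uniformity_sqm :: "('a sqm \<times> 'a sqm) filter"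
  where "uniformity_sqm = (INF e\<in>{0 <..}. principal {(x, y). dist x y < e})"
definition open_sqm :: "'a sqm set \<Rightarrow> bool"
  where "open_sqm U = (\<forall>x\<in>U. \<forall>\<^sub>F (x', y) in uniformity. x' = x \<longrightarrow> y \<in> U)"
instance
proof
  fix x y :: "'a sqm" and a :: real
  show "norm x = 0 \<longleftrightarrow> x = 0"
    apply transfer
    apply (subst onorm_eq_0[OF sn_bl])
    using matrix_eq_mv by (metis matrix_vector_mult_0 matrix_vector_mult_0_right)
  show "norm (x + y) \<le> norm x + norm y"
    apply transfer
    subgoal for x y
    proof -
      have e: "(*v) (x + y) = (\<lambda>v. x *v v + y *v v)"
        by (rule ext) (simp add: matrix_vector_mult_add_rdistrib)
      show ?thesis unfolding e using onorm_triangle[OF sn_bl sn_bl, of x y] by simp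
    qed
    done
  show "norm (a *\<^sub>R x) = \<bar>a\<bar> * norm x"
    apply transfer
    subgoal for a x
    proof -
      have e: "(*v) (a *\<^sub>R x) = (\<lambda>v. a *\<^sub>R (x *v v))"
        by (rule ext) (simp add: scaleR_matrix_vector_assoc)
      show ?thesis unfolding e using onorm_scaleR[OF sn_bl, of a x] by simp
    qed
    done
qed (simp_all add: sgn_sqm_def dist_sqm_def uniformity_sqm_def open_sqm_def)
end

lemma mat1_ne0: "(0::real^'n::finite^'n) \<noteq> mat 1"
proof
  assume "(0::real^'n::finite^'n) = mat 1"
  then have "(0::real^'n^'n) $ i $ i = mat 1 $ i $ i" for i by simp
  then show False by (simp add: mat_def)
qed

lemma onorm_mult: "onorm ((*v) ((x::real^'n::finite^'n) ** y)) \<le> onorm ((*v) x) * onorm ((*v) y)"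
proof -
  have e: "(*v) (x ** y) = (\<lambda>v. x *v v) o (\<lambda>v. y *v v)"
    by (rule ext) (simp add: matrix_vector_mul_assoc)
  show ?thesis unfolding e by (rule onorm_compose[OF sn_bl sn_bl])
qed

lemma onorm_mat1: "onorm ((*v) (mat 1::real^'n::finite^'n)) = 1"
proof -
  have e: "(*v) (mat 1::real^'n::finite^'n) = (\<lambda>v. v)" by (rule ext) simp
  show ?thesis unfolding e by (rule onorm_id)
qed

instantiation sqm :: (finite) real_normed_algebra_1
begin
lift_definition times_sqm :: "'a sqm \<Rightarrow> 'a sqm \<Rightarrow> 'a sqm" is "(**)" .
lift_definition one_sqm :: "'a sqm" is "mat 1" .
instance
proof
  fix x y z :: "'a sqm" and a :: real
  show "x * y * z = x * (y * z)" by transfer (simp add: matrix_mul_assoc)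
  show "1 * x = x" by transfer simp
  show "x * 1 = x" by transfer simp
  show "(x + y) * z = x * z + y * z" by transfer (simp add: matrix_add_rdistrib')
  show "x * (y + z) = x * y + x * z" by transfer (simp add: matrix_add_ldistrib)
  show "a *\<^sub>R x * y = a *\<^sub>R (x * y)" by transfer (simp add: matrix_matrix_mult_def vec_eq_iff sum_distrib_left mult_ac)
  show "x * a *\<^sub>R y = a *\<^sub>R (x * y)" by transfer (simp add: matrix_matrix_mult_def vec_eq_iff sum_distrib_left mult_ac)
  show "(0::'a sqm) \<noteq> 1"
    by transfer (rule mat1_ne0)
  show "norm (x * y) \<le> norm x * norm y"
    by transfer (rule onorm_mult)
  show "norm (1::'a sqm) = 1"
    by transfer (rule onorm_mat1)
qed
end


lemma norm_mat_le_onorm: "norm (A::real^'n::finite^'n) \<le> real (CARD('n) * CARD('n)) * onorm ((*v) A)"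
proof -
  have "norm A \<le> (\<Sum>i\<in>UNIV. norm (A $ i))"
    unfolding norm_vec_def by (rule L2_set_le_sum) simp
  also have "\<dots> \<le> (\<Sum>i\<in>(UNIV::'n set). \<Sum>j\<in>(UNIV::'n set). onorm ((*v) A))"
  proof (rule sum_mono)
    fix i
    have "norm (A $ i) \<le> (\<Sum>j\<in>UNIV. \<bar>A $ i $ j\<bar>)" by (rule norm_le_l1_cart)
    also have "\<dots> \<le> (\<Sum>j\<in>(UNIV::'n set). onorm ((*v) A))"
      by (rule sum_mono) (rule matrix_component_le_onorm)
    finally show "norm (A $ i) \<le> (\<Sum>j\<in>(UNIV::'n set). onorm ((*v) A))" .
  qed
  finally show ?thesis by simp
qed

lemma onorm_le_norm_mat: "onorm ((*v) (A::real^'n::finite^'n)) \<le> real (CARD('n) * CARD('n)) * norm A"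
proof -
  have "onorm ((*v) A) \<le> (\<Sum>i\<in>UNIV. \<Sum>j\<in>UNIV. \<bar>A $ i $ j\<bar>)"
    by (rule onorm_le_matrix_component_sum)
  also have "\<dots> \<le> (\<Sum>i\<in>(UNIV::'n set). \<Sum>j\<in>(UNIV::'n set). norm A)"
  proof (intro sum_mono)
    fix i j
    have "\<bar>A $ i $ j\<bar> \<le> norm (A $ i)" by (rule component_le_norm_cart)
    also have "\<dots> \<le> norm A" by (rule Finite_Cartesian_Product.norm_nth_le)
    finally show "\<bar>A $ i $ j\<bar> \<le> norm A" .
  qed
  finally show ?thesis by simp
qed

lemma bl_mat_of: "bounded_linear (mat_of :: 'n::finite sqm \<Rightarrow> _)"
proof (rule bounded_linear_intro[where K = "real (CARD('n) * CARD('n))"])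
  fix x y :: "'n sqm" and r :: real
  show "mat_of (x + y) = mat_of x + mat_of y" by transfer simp
  show "mat_of (r *\<^sub>R x) = r *\<^sub>R mat_of x" by transfer simp
  show "norm (mat_of x) \<le> norm x * real (CARD('n) * CARD('n))"
    using norm_mat_le_onorm[of "mat_of x"] by (simp add: norm_sqm.rep_eq mult.commute)
qed

lemma bl_Sqm: "bounded_linear (Sqm :: _ \<Rightarrow> 'n::finite sqm)"
proof (rule bounded_linear_intro[where K = "real (CARD('n) * CARD('n))"])
  fix x y :: "real^'n^'n" and r :: real
  show "Sqm (x + y) = Sqm x + Sqm y" by transfer simp
  show "Sqm (r *\<^sub>R x) = r *\<^sub>R Sqm x" by transfer simp
  show "norm (Sqm x) \<le> norm x * real (CARD('n) * CARD('n))"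
    using onorm_le_norm_mat[of x] by (simp add: norm_sqm.abs_eq eq_onp_def mult.commute)
qed

instance sqm :: (finite) banach
proof
  fix X :: "nat \<Rightarrow> 'a sqm"
  assume "Cauchy X"
  then have "Cauchy (\<lambda>n. mat_of (X n))" by (rule bounded_linear.Cauchy[OF bl_mat_of])
  then obtain L where "(\<lambda>n. mat_of (X n)) \<longlonglongrightarrow> L" by (auto simp: convergent_eq_Cauchy[symmetric] convergent_def)
  then have "(\<lambda>n. Sqm (mat_of (X n))) \<longlonglongrightarrow> Sqm L" by (rule bounded_linear.tendsto[OF bl_Sqm])
  then show "convergent X" by (auto simp: convergent_def mat_of_inverse)
qed


lemma mat_of_Sqm[simp]: "mat_of (Sqm A) = A"
  by (simp add: Sqm_inverse)

lemma mat_of_mult: "mat_of (x * y) = mat_of x ** mat_of y"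
  by (simp add: times_sqm.rep_eq)

lemma mat_of_scaleR: "mat_of (r *\<^sub>R x) = r *\<^sub>R mat_of x"
  by (simp add: scaleR_sqm.rep_eq)

lemma mat_of_one: "mat_of 1 = mat 1"
  by (simp add: one_sqm.rep_eq)

lemma norm_sqm_eq: "norm x = spec_norm (mat_of x)"
  by (simp add: norm_sqm.rep_eq spec_norm_def)

lemma matpow_Suc: "matpow A (Suc k) = A ** matpow A k"
  by (simp add: matpow_def)

lemma mat_of_power: "mat_of (x ^ k) = matpow (mat_of x) k"
  by (induction k) (simp_all add: mat_of_one matpow_def mat_of_mult)

lemma mexp_eq: "mexp A t = mat_of (exp (t *\<^sub>R Sqm A))"
proof -
  have "(\<lambda>n. (t *\<^sub>R Sqm A) ^ n /\<^sub>R fact n) sums exp (t *\<^sub>R Sqm A)"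
    unfolding exp_def by (rule summable_sums[OF summable_exp_generic])
  from bounded_linear.sums[OF bl_mat_of this]
  have "(\<lambda>n. mat_of ((t *\<^sub>R Sqm A) ^ n /\<^sub>R fact n)) sums mat_of (exp (t *\<^sub>R Sqm A))" .
  moreover have "mat_of ((t *\<^sub>R Sqm A) ^ n /\<^sub>R fact n) = (t ^ n / fact n) *\<^sub>R matpow A n" for n
    using mat_of_power[of "Sqm A" n]
    by (simp add: scaleR_power mat_of_scaleR divide_inverse mult.commute)
  ultimately show ?thesis unfolding mexp_def by (simp add: sums_iff)
qed

lemma mexp_deriv: "((\<lambda>t. mexp A t) has_vector_derivative (mexp A t ** A)) (at t)"
  unfolding mexp_eq
  using bounded_linear.has_vector_derivative[OF bl_mat_of exp_scaleR_has_vector_derivative_right[of "Sqm A" t]]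
  by (simp add: mat_of_mult)

lemma mexp_inv: "mexp A t ** mexp A (- t) = mat 1"
proof -
  have "exp (t *\<^sub>R Sqm A) * exp (- (t *\<^sub>R Sqm A)) = 1" by (rule exp_minus_inverse)
  then have "mat_of (exp (t *\<^sub>R Sqm A) * exp ((- t) *\<^sub>R Sqm A)) = mat 1" by (simp add: mat_of_one)
  then show ?thesis unfolding mexp_eq by (simp add: mat_of_mult)
qed

lemma mexp_0: "mexp A 0 = mat 1"
  unfolding mexp_eq by (simp add: mat_of_one)

lemma mexp_norm: "spec_norm (mexp A t) \<le> exp (\<bar>t\<bar> * spec_norm A)"
proof -
  have "norm (exp (t *\<^sub>R Sqm A)) \<le> exp (norm (t *\<^sub>R Sqm A))" by (rule norm_exp)
  also have "norm (t *\<^sub>R Sqm A) = \<bar>t\<bar> * spec_norm A" by (simp only: norm_scaleR) (simp add: norm_sqm_eq)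
  finally show ?thesis unfolding mexp_eq norm_sqm_eq .
qed

lemma spec_norm_nonneg: "0 \<le> spec_norm (X::real^'n::finite^'m::finite)"
  unfolding spec_norm_def by (rule onorm_pos_le[OF sn_bl])

lemma spec_norm_mv: "norm (X *v v) \<le> spec_norm (X::real^'n::finite^'m::finite) * norm v"
  unfolding spec_norm_def by (rule onorm[OF sn_bl])

lemma spec_norm_vm: "norm (v v* X) \<le> spec_norm (X::real^'n::finite^'m::finite) * norm v"
proof -
  have "(norm (v v* X))^2 = v \<bullet> (X *v (v v* X))"
    by (simp add: power2_norm_eq_inner dot_lmul_matrix)
  also have "\<dots> \<le> norm v * norm (X *v (v v* X))" by (rule Cauchy_Schwarz_ineq2[THEN order_trans[OF abs_ge_self]])
  also have "\<dots> \<le> norm v * (spec_norm X * norm (v v* X))"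
    by (rule mult_left_mono[OF spec_norm_mv]) simp
  finally have h: "(norm (v v* X))^2 \<le> (spec_norm X * norm v) * norm (v v* X)"
    by (simp add: mult_ac)
  show ?thesis
  proof (cases "norm (v v* X) = 0")
    case True then show ?thesis using spec_norm_nonneg[of X] by simp
  next
    case False
    then have "0 < norm (v v* X)" by simp
    with h show ?thesis by (simp add: power2_eq_square)
  qed
qed

lemma spec_norm_transpose: "spec_norm (transpose (X::real^'n::finite^'m::finite)) = spec_norm X"
proof -
  have a: "spec_norm (transpose Y) \<le> spec_norm Y" for Y :: "real^'k::finite^'l::finite"
    unfolding spec_norm_def[of "transpose Y"]
    by (rule onorm_le) (simp add: transpose_matrix_vector spec_norm_vm)
  show ?thesis using a[of X] a[of "transpose X"] by simp
qed


lemma exp_decay: assumes "k > (0::real)" shows "((\<lambda>t. exp (- k * t)) \<longlongrightarrow> 0) at_top"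
proof -
  have "filterlim (\<lambda>t. k * t) at_top at_top"
    by (rule filterlim_tendsto_pos_mult_at_top[OF tendsto_const assms filterlim_ident])
  then have "filterlim (\<lambda>t. exp (k * t)) at_top at_top"
    by (rule filterlim_compose[OF exp_at_top])
  then have "((\<lambda>t. inverse (exp (k * t))) \<longlongrightarrow> 0) at_top"
    by (rule tendsto_inverse_0_at_top)
  then show ?thesis by (simp add: exp_minus[symmetric])
qed

lemma upper_from_deriv:
  fixes g g' :: "real \<Rightarrow> real"
  assumes d: "\<And>t. (g has_real_derivative g' t) (at t)"
    and pos: "\<And>t. t \<ge> 0 \<Longrightarrow> 0 \<le> g' t + K * k * exp (- k * t)"
    and lim: "(g \<longlongrightarrow> 0) at_top" and k: "k > 0"
  shows "g 0 \<le> K"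
proof -
  define u where "u t = g t - K * exp (- k * t)" for t
  have du: "(u has_real_derivative (g' t + K * k * exp (- k * t))) (at t)" for t
    unfolding u_def
    by (rule derivative_eq_intros d refl | simp)+
  have mono: "u 0 \<le> u T" if "T \<ge> 0" for T
  proof (rule DERIV_nonneg_imp_increasing_open[OF that])
    fix x assume "0 < x" "x < T"
    then show "\<exists>y. (u has_real_derivative y) (at x) \<and> 0 \<le> y" using du pos by force
  next
    show "continuous_on {0..T} u"
      using du by (meson DERIV_isCont continuous_at_imp_continuous_on)
  qed
  have "(u \<longlongrightarrow> 0 - K * 0) at_top"
    unfolding u_def by (intro tendsto_intros lim exp_decay k)
  then have "(u \<longlongrightarrow> 0) at_top" by simp
  moreover have "eventually (\<lambda>T. u 0 \<le> u T) at_top"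
    using mono by (auto simp: eventually_at_top_linorder)
  ultimately have "u 0 \<le> 0" by (intro tendsto_lowerbound) auto
  then show ?thesis by (simp add: u_def)
qed

lemma bl_vm: "bounded_linear (\<lambda>X::real^'n::finite^'m::finite. v v* X)"
proof -
  have "linear (\<lambda>X::real^'n::finite^'m::finite. v v* X)"
    by (rule linearI) (simp_all add: vector_matrix_mult_def vec_eq_iff sum.distrib algebra_simps sum_distrib_left)
  then show ?thesis by (simp add: linear_conv_bounded_linear)
qed

lemma w_deriv: "((\<lambda>t. v v* mexp A t) has_vector_derivative ((v v* mexp A t) v* A)) (at t)"
  using bounded_linear.has_vector_derivative[OF bl_vm mexp_deriv, of v A t]
  by (simp add: vector_matrix_mul_assoc)

lemma lyap_ident:
  fixes A P B :: "real^'n::finite^'n" and w :: "real^'n"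
  assumes lyap: "A ** P + P ** transpose A + B ** transpose B = 0"
  shows "w \<bullet> (P *v (w v* A)) + (w v* A) \<bullet> (P *v w) = - ((norm (w v* B))^2)"
proof -
  have e: "A ** P + P ** transpose A = - (B ** transpose B)"
    using lyap by (simp add: eq_neg_iff_add_eq_0)
  have 1: "(w v* A) \<bullet> (P *v w) = w \<bullet> ((A ** P) *v w)"
    by (simp add: dot_lmul_matrix matrix_vector_mul_assoc)
  have 2: "w \<bullet> (P *v (w v* A)) = w \<bullet> ((P ** transpose A) *v w)"
    by (simp add: matrix_vector_mul_assoc[symmetric] transpose_matrix_vector)
  have 3: "(norm (w v* B))^2 = w \<bullet> ((B ** transpose B) *v w)"
    by (simp add: power2_norm_eq_inner dot_lmul_matrix matrix_vector_mul_assoc[symmetric] transpose_matrix_vector)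
  have "w \<bullet> (P *v (w v* A)) + (w v* A) \<bullet> (P *v w) = w \<bullet> ((A ** P + P ** transpose A) *v w)"
    unfolding 1 2 by (simp add: matrix_vector_mult_add_rdistrib inner_add_right)
  also have "\<dots> = - (w \<bullet> ((B ** transpose B) *v w))"
  proof -
    have "(- (B ** transpose B)) *v w = - ((B ** transpose B) *v w)"
      by (simp add: matrix_vector_mult_def vec_eq_iff sum_negf)
    then show ?thesis unfolding e by simp
  qed
  finally show ?thesis unfolding 3 .
qed


lemma g_deriv:
  fixes A P B :: "real^'n::finite^'n" and v :: "real^'n"
  assumes lyap: "A ** P + P ** transpose A + B ** transpose B = 0"
  shows "((\<lambda>t. (v v* mexp A t) \<bullet> (P *v (v v* mexp A t))) has_real_derivative
          - ((norm ((v v* mexp A t) v* B))^2)) (at t)"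
proof -
  let ?w = "v v* mexp A t"
  let ?w' = "?w v* A"
  have wd: "((\<lambda>t. v v* mexp A t) has_derivative (\<lambda>h. h *\<^sub>R ?w')) (at t)"
    using w_deriv[of v A t] by (simp add: has_vector_derivative_def)
  have pwd: "((\<lambda>t. P *v (v v* mexp A t)) has_derivative (\<lambda>h. P *v (h *\<^sub>R ?w'))) (at t)"
    by (rule bounded_linear.has_derivative[OF sn_bl wd])
  have gd: "((\<lambda>t. (v v* mexp A t) \<bullet> (P *v (v v* mexp A t))) has_derivative
      (\<lambda>h. ?w \<bullet> (P *v (h *\<^sub>R ?w')) + (h *\<^sub>R ?w') \<bullet> (P *v ?w))) (at t)"
    by (rule has_derivative_inner[OF wd pwd])
  have eq: "(\<lambda>h. ?w \<bullet> (P *v (h *\<^sub>R ?w')) + (h *\<^sub>R ?w') \<bullet> (P *v ?w))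
      = (*) (- ((norm (?w v* B))^2))"
  proof
    fix h :: real
    have "?w \<bullet> (P *v (h *\<^sub>R ?w')) + (h *\<^sub>R ?w') \<bullet> (P *v ?w)
        = h * (?w \<bullet> (P *v ?w') + ?w' \<bullet> (P *v ?w))"
      by (simp add: matrix_vector_mult_scaleR algebra_simps)
    also have "\<dots> = h * (- ((norm (?w v* B))^2))"
      using lyap_ident[OF lyap, of ?w] by simp
    finally show "?w \<bullet> (P *v (h *\<^sub>R ?w')) + (h *\<^sub>R ?w') \<bullet> (P *v ?w) = (- ((norm (?w v* B))^2)) * h"
      by (simp add: mult.commute)
  qed
  show ?thesis unfolding has_field_derivative_def using gd unfolding eq .
qed


lemma exp_sq: "(exp (- a * t))^2 = exp (- (2 * a) * (t::real))"
proof -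
  have "exp (- a * t) * exp (- a * t) = exp (- a * t + - a * t)" by (rule mult_exp_exp)
  also have "- a * t + - a * t = - (2 * a) * t" by simp
  finally show ?thesis by (simp only: power2_eq_square)
qed

lemma wnorm_upper:
  fixes A :: "real^'n::finite^'n" and v :: "real^'n"
  assumes Mb: "\<And>t. t \<ge> 0 \<Longrightarrow> spec_norm (mexp A t) \<le> M * exp (- alpha * t)" and t: "t \<ge> 0"
  shows "(norm (v v* mexp A t))^2 \<le> M^2 * (norm v)^2 * exp (- (2 * alpha) * t)"
proof -
  have "norm (v v* mexp A t) \<le> spec_norm (mexp A t) * norm v" by (rule spec_norm_vm)
  also have "\<dots> \<le> M * exp (- alpha * t) * norm v" by (rule mult_right_mono[OF Mb[OF t]]) simp
  finally have "(norm (v v* mexp A t))^2 \<le> (M * exp (- alpha * t) * norm v)^2"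
    by (rule power_mono) simp
  also have "\<dots> = M^2 * (norm v)^2 * (exp (- alpha * t))^2" by (simp add: power_mult_distrib)
  finally show ?thesis unfolding exp_sq .
qed

lemma g_lim:
  fixes A P :: "real^'n::finite^'n" and v :: "real^'n"
  assumes Mb: "\<And>t. t \<ge> 0 \<Longrightarrow> spec_norm (mexp A t) \<le> M * exp (- alpha * t)" and a: "alpha > 0"
  shows "((\<lambda>t. (v v* mexp A t) \<bullet> (P *v (v v* mexp A t))) \<longlongrightarrow> 0) at_top"
proof (rule Lim_null_comparison)
  let ?c = "spec_norm P * (M^2 * (norm v)^2)"
  show "eventually (\<lambda>t. norm ((v v* mexp A t) \<bullet> (P *v (v v* mexp A t))) \<le> ?c * exp (- (2 * alpha) * t)) at_top"
    unfolding eventually_at_top_linorder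
  proof (intro exI allI impI)
    fix t :: real assume t: "t \<ge> 0"
    let ?w = "v v* mexp A t"
    have "norm (?w \<bullet> (P *v ?w)) \<le> norm ?w * norm (P *v ?w)"
      using Cauchy_Schwarz_ineq2 by simp
    also have "\<dots> \<le> norm ?w * (spec_norm P * norm ?w)"
      by (rule mult_left_mono[OF spec_norm_mv]) simp
    also have "\<dots> = spec_norm P * (norm ?w)^2" by (simp add: power2_eq_square)
    also have "\<dots> \<le> spec_norm P * (M^2 * (norm v)^2 * exp (- (2 * alpha) * t))"
      by (rule mult_left_mono[OF wnorm_upper[OF Mb t] spec_norm_nonneg])
    finally show "norm (?w \<bullet> (P *v ?w)) \<le> ?c * exp (- (2 * alpha) * t)" by (simp add: mult_ac)
  qed
  have "((\<lambda>t. ?c * exp (- (2 * alpha) * t)) \<longlongrightarrow> ?c * 0) at_top"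
    by (intro tendsto_intros exp_decay) (use a in simp)
  then show "((\<lambda>t. ?c * exp (- (2 * alpha) * t)) \<longlongrightarrow> 0) at_top" by simp
qed

lemma quad_upper:
  fixes A P B :: "real^'n::finite^'n" and v :: "real^'n"
  assumes lyap: "A ** P + P ** transpose A + B ** transpose B = 0"
    and Mb: "\<And>t. t \<ge> 0 \<Longrightarrow> spec_norm (mexp A t) \<le> M * exp (- alpha * t)" and a: "alpha > 0"
  shows "v \<bullet> (P *v v) \<le> M^2 * (spec_norm B)^2 / (2 * alpha) * (norm v)^2"
proof -
  let ?K = "M^2 * (spec_norm B)^2 / (2 * alpha) * (norm v)^2"
  have "(\<lambda>t. (v v* mexp A t) \<bullet> (P *v (v v* mexp A t))) 0 \<le> ?K"
  proof (rule upper_from_deriv[OF g_deriv[OF lyap] _ g_lim[OF Mb a]])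
    show "0 < 2 * alpha" using a by simp
    fix t :: real assume t: "t \<ge> 0"
    let ?w = "v v* mexp A t"
    have "norm (?w v* B) \<le> spec_norm B * norm ?w" by (rule spec_norm_vm)
    then have "(norm (?w v* B))^2 \<le> (spec_norm B * norm ?w)^2" by (rule power_mono) simp
    also have "\<dots> = (spec_norm B)^2 * (norm ?w)^2" by (simp add: power_mult_distrib)
    also have "\<dots> \<le> (spec_norm B)^2 * (M^2 * (norm v)^2 * exp (- (2 * alpha) * t))"
      by (rule mult_left_mono[OF wnorm_upper[OF Mb t]]) auto
    also have "\<dots> = ?K * (2 * alpha) * exp (- (2 * alpha) * t)" using a by (simp add: field_simps)
    finally show "0 \<le> - ((norm (?w v* B))^2) + ?K * (2 * alpha) * exp (- (2 * alpha) * t)" by simp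
  qed
  then show ?thesis by (simp add: mexp_0)
qed

lemma quad_lower:
  fixes A P B :: "real^'n::finite^'n" and v :: "real^'n"
  assumes lyap: "A ** P + P ** transpose A + B ** transpose B = 0"
    and Mb: "\<And>t. t \<ge> 0 \<Longrightarrow> spec_norm (mexp A t) \<le> M * exp (- alpha * t)" and a: "alpha > 0"
    and mB: "\<And>w. m * (norm w)^2 \<le> (norm (w v* B))^2" and m: "m \<ge> 0"
    and sA: "spec_norm A > 0"
  shows "m / (2 * spec_norm A) * (norm v)^2 \<le> v \<bullet> (P *v v)"
proof -
  let ?K = "- (m / (2 * spec_norm A) * (norm v)^2)"
  let ?k = "2 * spec_norm A"
  have "(\<lambda>t. - ((v v* mexp A t) \<bullet> (P *v (v v* mexp A t)))) 0 \<le> ?K"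
  proof (rule upper_from_deriv)
    show "0 < ?k" using sA by simp
    show "((\<lambda>t. - ((v v* mexp A t) \<bullet> (P *v (v v* mexp A t)))) \<longlongrightarrow> 0) at_top"
      using tendsto_minus[OF g_lim[OF Mb a, of v P]] by simp
    fix t :: real
    show "((\<lambda>t. - ((v v* mexp A t) \<bullet> (P *v (v v* mexp A t)))) has_real_derivative
        - (- ((norm ((v v* mexp A t) v* B))^2))) (at t)"
      by (rule DERIV_minus[OF g_deriv[OF lyap]])
  next
    fix t :: real assume t: "t \<ge> 0"
    let ?w = "v v* mexp A t"
    have "v = ?w v* mexp A (- t)"
      by (simp add: vector_matrix_mul_assoc mexp_inv)
    then have "norm v \<le> spec_norm (mexp A (- t)) * norm ?w"
      using spec_norm_vm[of ?w "mexp A (- t)"] by simp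
    also have "\<dots> \<le> exp (t * spec_norm A) * norm ?w"
      using mexp_norm[of A "- t"] t by (intro mult_right_mono) simp_all
    finally have "norm v * exp (- (spec_norm A) * t) \<le> norm ?w"
      by (simp add: exp_minus field_simps)
    then have "(norm v * exp (- (spec_norm A) * t))^2 \<le> (norm ?w)^2"
      by (rule power_mono) simp
    then have "(norm v)^2 * exp (- ?k * t) \<le> (norm ?w)^2"
      by (simp only: power_mult_distrib exp_sq)
    then have "m * ((norm v)^2 * exp (- ?k * t)) \<le> m * (norm ?w)^2"
      by (rule mult_left_mono[OF _ m])
    also have "\<dots> \<le> (norm (?w v* B))^2" by (rule mB)
    finally have "m * ((norm v)^2 * exp (- ?k * t)) \<le> (norm (?w v* B))^2" .
    moreover have "?K * ?k * exp (- ?k * t) = - (m * ((norm v)^2 * exp (- ?k * t)))"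
      using sA by (simp add: field_simps)
    ultimately show "0 \<le> - (- ((norm (?w v* B))^2)) + ?K * ?k * exp (- ?k * t)" by simp
  qed
  then show ?thesis by (simp add: mexp_0)
qed


lemma trace_quad:
  fixes C :: "real^'n::finite^'k::finite" and P :: "real^'n^'n"
  shows "trace (C ** P ** transpose C) = (\<Sum>i\<in>UNIV. (C $ i) \<bullet> (P *v (C $ i)))"
  unfolding trace_def
proof (rule sum.cong[OF refl])
  fix i
  have "(C ** P ** transpose C) $ i $ i = (\<Sum>j\<in>UNIV. (\<Sum>l\<in>UNIV. C$i$l * P$l$j) * C$i$j)"
    by (simp add: matrix_matrix_mult_def transpose_def)
  also have "\<dots> = (\<Sum>j\<in>UNIV. \<Sum>l\<in>UNIV. C$i$l * P$l$j * C$i$j)"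
    by (simp add: sum_distrib_right)
  also have "\<dots> = (\<Sum>l\<in>UNIV. \<Sum>j\<in>UNIV. C$i$l * P$l$j * C$i$j)"
    by (rule sum.swap)
  also have "\<dots> = (\<Sum>l\<in>UNIV. C$i$l * (\<Sum>j\<in>UNIV. P$l$j * C$i$j))"
    by (simp add: sum_distrib_left mult.assoc)
  also have "\<dots> = (C $ i) \<bullet> (P *v (C $ i))"
    by (simp add: matrix_vector_mult_def inner_vec_def)
  finally show "(C ** P ** transpose C) $ i $ i = (C $ i) \<bullet> (P *v (C $ i))" .
qed

lemma frob_sq:
  fixes C :: "real^'n::finite^'k::finite"
  shows "(frob_norm C)^2 = (\<Sum>i\<in>UNIV. (norm (C $ i))^2)"
proof -
  have "(frob_norm C)^2 = (\<Sum>i\<in>UNIV. \<Sum>j\<in>UNIV. (C$i$j)^2)"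
    unfolding frob_norm_def by (simp add: sum_nonneg)
  also have "\<dots> = (\<Sum>i\<in>UNIV. (norm (C $ i))^2)"
    by (simp add: norm_eq_sqrt_inner inner_vec_def power2_eq_square[symmetric] sum_nonneg)
  finally show ?thesis .
qed

lemma frob_nonneg: "0 \<le> frob_norm C"
  unfolding frob_norm_def by (simp add: sum_nonneg)

lemma trace_upper:
  fixes C :: "real^'n::finite^'k::finite" and P :: "real^'n^'n"
  assumes "\<And>v. v \<bullet> (P *v v) \<le> U * (norm v)^2"
  shows "trace (C ** P ** transpose C) \<le> U * (frob_norm C)^2"
  unfolding trace_quad frob_sq sum_distrib_left by (rule sum_mono) (rule assms)

lemma trace_lower:
  fixes C :: "real^'n::finite^'k::finite" and P :: "real^'n^'n"
  assumes "\<And>v. L * (norm v)^2 \<le> v \<bullet> (P *v v)"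
  shows "L * (frob_norm C)^2 \<le> trace (C ** P ** transpose C)"
  unfolding trace_quad frob_sq sum_distrib_left by (rule sum_mono) (rule assms)

lemma sum_UNIV_plus:
  "(\<Sum>j\<in>(UNIV::('c::finite+'d::finite) set). f j) = (\<Sum>j\<in>UNIV. f (Inl j)) + (\<Sum>j\<in>UNIV. f (Inr j))"
proof -
  have "(\<Sum>j\<in>(UNIV::('c::finite+'d::finite) set). f j) = (\<Sum>j\<in>(UNIV <+> UNIV). f j)"
    by (simp only: UNIV_Plus_UNIV)
  also have "\<dots> = (\<Sum>j\<in>UNIV. f (Inl j)) + (\<Sum>j\<in>UNIV. f (Inr j))"
    by (simp add: sum.Plus o_def del: UNIV_Plus_UNIV)
  finally show ?thesis .
qed

lemma frob_hcat:
  fixes X :: "real^'c::finite^'a::finite" and Y :: "real^'d::finite^'a"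
  shows "(frob_norm (hcat X Y))^2 = (frob_norm X)^2 + (frob_norm Y)^2"
proof -
  have "(frob_norm (hcat X Y))^2 = (\<Sum>i\<in>UNIV. \<Sum>j\<in>UNIV. (hcat X Y $i$j)^2)"
    unfolding frob_norm_def by (simp add: sum_nonneg)
  also have "\<dots> = (\<Sum>i\<in>UNIV. (\<Sum>j\<in>UNIV. (X$i$j)^2) + (\<Sum>j\<in>UNIV. (Y$i$j)^2))"
    by (simp add: sum_UNIV_plus hcat_def)
  also have "\<dots> = (frob_norm X)^2 + (frob_norm Y)^2"
    unfolding frob_norm_def by (simp add: sum_nonneg sum.distrib)
  finally show ?thesis .
qed

lemma frob_neg: "frob_norm (- C) = frob_norm C"
  unfolding frob_norm_def by simp

lemma frob_zero: "frob_norm (0::real^'n::finite^'m::finite) = 0"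
  unfolding frob_norm_def by simp


lemma eig_set_finite_pos:
  fixes B :: "real^'n::finite^'n"
  assumes injB: "inj ((*v) B)"
  defines "S \<equiv> {l::real. \<exists>v. v \<noteq> 0 \<and> (transpose B ** B) *v v = l *\<^sub>R v}"
  shows "finite S" and "\<And>l. l \<in> S \<Longrightarrow> l > 0"
proof -
  define H where "H = transpose B ** B"
  have Hq: "x \<bullet> (H *v y) = (B *v x) \<bullet> (B *v y)" for x y
  proof -
    have "x \<bullet> (H *v y) = x \<bullet> ((B *v y) v* B)"
      by (simp add: H_def matrix_vector_mul_assoc[symmetric])
    also have "\<dots> = (B *v y) \<bullet> (B *v x)" by (simp add: inner_commute[of x] dot_lmul_matrix)
    finally show ?thesis by (simp add: inner_commute)
  qed
  have SH: "S = {l. \<exists>v. v \<noteq> 0 \<and> H *v v = l *\<^sub>R v}" by (simp add: S_def H_def)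
  show pos: "l > 0" if lS: "l \<in> S" for l
  proof -
    obtain v where v: "v \<noteq> 0" "H *v v = l *\<^sub>R v" using lS SH by auto
    have "B *v v \<noteq> 0"
    proof
      assume "B *v v = 0"
      then have "B *v v = B *v 0" by simp
      with injB v(1) show False by (meson injD)
    qed
    then have "0 < (B *v v) \<bullet> (B *v v)" by simp
    also have "\<dots> = v \<bullet> (H *v v)" by (simp add: Hq)
    also have "\<dots> = l * (v \<bullet> v)" by (simp add: v(2))
    finally have "0 < l * (v \<bullet> v)" .
    moreover have "0 < v \<bullet> v" using v(1) by simp
    ultimately show ?thesis by (simp add: zero_less_mult_iff)
  qed
  define ev where "ev l = (SOME v. v \<noteq> 0 \<and> H *v v = l *\<^sub>R v)" for l
  have evp: "ev l \<noteq> 0 \<and> H *v ev l = l *\<^sub>R ev l" if "l \<in> S" for l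
    unfolding ev_def by (rule someI_ex) (use that SH in auto)
  have orth: "ev l1 \<bullet> ev l2 = 0" if "l1 \<in> S" "l2 \<in> S" "l1 \<noteq> l2" for l1 l2
  proof -
    let ?x = "ev l1" and ?y = "ev l2"
    have "l2 * (?x \<bullet> ?y) = ?x \<bullet> (H *v ?y)" using evp[OF that(2)] by simp
    also have "\<dots> = ?y \<bullet> (H *v ?x)" by (simp add: Hq inner_commute)
    also have "\<dots> = l1 * (?x \<bullet> ?y)" using evp[OF that(1)] by (simp add: inner_commute)
    finally have "(l1 - l2) * (?x \<bullet> ?y) = 0" by (simp add: algebra_simps) (use eq_commute in blast)
    with that(3) show ?thesis by simp
  qed
  have inj: "inj_on ev S"
  proof (rule inj_onI)
    fix l1 l2 assume a: "l1 \<in> S" "l2 \<in> S" "ev l1 = ev l2"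
    show "l1 = l2"
    proof (rule ccontr)
      assume "l1 \<noteq> l2"
      then have "ev l1 \<bullet> ev l1 = 0" using orth[OF a(1,2)] a(3) by simp
      then show False using evp[OF a(1)] by simp
    qed
  qed
  have "pairwise orthogonal (ev ` S)"
    unfolding pairwise_def orthogonal_def using orth by auto
  moreover have "0 \<notin> ev ` S" using evp by auto
  ultimately have "independent (ev ` S)" by (rule pairwise_orthogonal_independent)
  then have "finite (ev ` S)" by (rule finiteI_independent)
  then show "finite S" using inj by (rule finite_imageD)
qed


lemma inner_expand:
  fixes p q :: "'a::real_inner"
  shows "(p + t *\<^sub>R q) \<bullet> (p + t *\<^sub>R q) = p \<bullet> p + 2 * t * (p \<bullet> q) + t^2 * (q \<bullet> q)"
  by (simp add: inner_add_left inner_add_right inner_commute[of q p] power2_eq_square algebra_simps)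

lemma quad_perturb:
  fixes c d :: real
  assumes "\<And>t. 0 \<le> 2 * t * c + t^2 * d" and "d \<ge> 0"
  shows "c = 0"
proof (rule ccontr)
  assume c: "c \<noteq> 0"
  define t where "t = - c / (d + 1)"
  have d1: "d + 1 > 0" using assms(2) by simp
  have td: "t * (d + 1) = - c" unfolding t_def using d1 by simp
  have e1: "(d + 1)^2 * (2 * t * c + t^2 * d) = 2 * c * (t * (d + 1)) * (d + 1) + (t * (d + 1))^2 * d"
    by (simp add: power2_eq_square algebra_simps)
  have e2: "2 * c * (t * (d + 1)) * (d + 1) + (t * (d + 1))^2 * d = - (c^2 * (d + 2))"
    unfolding td by (simp add: power2_eq_square algebra_simps)
  have "0 \<le> 2 * t * c + t^2 * d" by (rule assms(1))
  then have "0 \<le> (d + 1)^2 * (2 * t * c + t^2 * d)" by simp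
  then have "c^2 * (d + 2) \<le> 0" unfolding e1 e2 by simp
  moreover have "c^2 * (d + 2) > 0" using c assms(2) by simp
  ultimately show False by simp
qed

lemma rayleigh:
  fixes B :: "real^'n::finite^'n"
  assumes injBt: "inj ((*v) (transpose B))"
  shows "\<exists>m w0. m > 0 \<and> w0 \<noteq> 0 \<and> (\<forall>w. m * (norm w)^2 \<le> (norm (w v* B))^2)
            \<and> B *v (w0 v* B) = m *\<^sub>R w0"
proof -
  define f where "f w = (norm (transpose B *v w))^2" for w :: "real^'n"
  have fv: "f w = (norm (w v* B))^2" for w by (simp add: f_def)
  have cont: "continuous_on (sphere 0 1) f"
    unfolding f_def by (intro continuous_intros)
  have ne: "sphere (0::real^'n) 1 \<noteq> {}" by simp
  obtain w0 where w0: "w0 \<in> sphere 0 1" "\<And>y. y \<in> sphere 0 1 \<Longrightarrow> f w0 \<le> f y"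
    using continuous_attains_inf[OF compact_sphere ne cont] by blast
  have nw0: "norm w0 = 1" using w0(1) by simp
  define m where "m = f w0"
  have scal: "f (c *\<^sub>R w) = c^2 * f w" for c w
    by (simp add: f_def power_mult_distrib scaleR_vector_matrix_assoc)
  have mb: "m * (norm w)^2 \<le> f w" for w
  proof (cases "w = 0")
    case True then show ?thesis by (simp add: f_def)
  next
    case False
    then have nw: "norm w > 0" by simp
    have "(inverse (norm w) *\<^sub>R w) \<in> sphere 0 1" using nw by simp
    then have "m \<le> f (inverse (norm w) *\<^sub>R w)" unfolding m_def by (rule w0(2))
    also have "\<dots> = f w / (norm w)^2" by (simp add: scal power_inverse field_simps)
    finally show ?thesis using nw by (simp add: field_simps)
  qed
  have w0ne: "w0 \<noteq> 0" using nw0 by auto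
  have Bw0: "transpose B *v w0 \<noteq> 0"
  proof
    assume "transpose B *v w0 = 0"
    then have "transpose B *v w0 = transpose B *v 0" by simp
    with injBt w0ne show False by (meson injD)
  qed
  have mpos: "m > 0" using Bw0 by (simp add: m_def f_def)
  define b where "b x y = (transpose B *v x) \<bullet> (transpose B *v y)" for x y :: "real^'n"
  have fb: "f x = b x x" for x by (simp add: f_def b_def power2_norm_eq_inner)
  have key: "b w0 u = m * (w0 \<bullet> u)" for u
  proof -
    let ?c = "b w0 u - m * (w0 \<bullet> u)"
    let ?d = "f u - m * (norm u)^2"
    have "?c = 0"
    proof (rule quad_perturb)
      show "0 \<le> ?d" using mb[of u] by simp
      fix t :: real
      have "m * (norm (w0 + t *\<^sub>R u))^2 \<le> f (w0 + t *\<^sub>R u)" by (rule mb)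
      have lin: "transpose B *v (w0 + t *\<^sub>R u) = transpose B *v w0 + t *\<^sub>R (transpose B *v u)"
        by (simp only: matrix_vector_right_distrib matrix_vector_mult_scaleR)
      have "f (w0 + t *\<^sub>R u) = m + 2 * t * b w0 u + t^2 * f u"
        unfolding fb b_def m_def lin inner_expand ..
      moreover have "(norm (w0 + t *\<^sub>R u))^2 = 1 + 2 * t * (w0 \<bullet> u) + t^2 * (norm u)^2"
        unfolding power2_norm_eq_inner inner_expand using nw0 by (simp add: power2_norm_eq_inner[symmetric])
      ultimately have "m * (1 + 2 * t * (w0 \<bullet> u) + t^2 * (norm u)^2) \<le> m + 2 * t * b w0 u + t^2 * f u"
        using \<open>m * (norm (w0 + t *\<^sub>R u))^2 \<le> f (w0 + t *\<^sub>R u)\<close> by simp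
      then show "0 \<le> 2 * t * ?c + t^2 * ?d" by (simp add: algebra_simps)
    qed
    then show ?thesis by simp
  qed
  have eig: "B *v (w0 v* B) = m *\<^sub>R w0"
  proof -
    let ?z = "B *v (w0 v* B) - m *\<^sub>R w0"
    have "u \<bullet> (B *v (w0 v* B)) = b w0 u" for u
      by (simp add: b_def inner_commute[of u] dot_lmul_matrix[symmetric]) (rule inner_commute)
    then have "u \<bullet> ?z = 0" for u using key[of u] by (simp add: inner_diff_right inner_commute)
    then have "?z \<bullet> ?z = 0" by blast
    then show ?thesis by simp
  qed
  show ?thesis using mpos w0ne mb eig by (auto simp: fv)
qed


lemma sigma_bound:
  fixes B :: "real^'n::finite^'n"
  assumes rk: "rank B = CARD('n)"
  shows "\<exists>m. 0 < (sigma_min B)^2 \<and> (sigma_min B)^2 \<le> m \<and> (\<forall>w. m * (norm w)^2 \<le> (norm (w v* B))^2)"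
proof -
  have injB: "inj ((*v) B)" using rk by (simp add: full_rank_injective)
  have injBt: "inj ((*v) (transpose B))"
    using rk full_rank_injective[of "transpose B"] rank_transpose[of B] by simp
  obtain m w0 where m: "m > 0" "w0 \<noteq> 0" "\<forall>w. m * (norm w)^2 \<le> (norm (w v* B))^2"
      "B *v (w0 v* B) = m *\<^sub>R w0"
    using rayleigh[OF injBt] by blast
  define S where "S = {l::real. \<exists>v. v \<noteq> 0 \<and> (transpose B ** B) *v v = l *\<^sub>R v}"
  have fin: "finite S" and pos: "\<And>l. l \<in> S \<Longrightarrow> l > 0"
    using eig_set_finite_pos[OF injB] unfolding S_def by auto
  have v0: "w0 v* B \<noteq> 0"
  proof
    assume "w0 v* B = 0"
    then have "transpose B *v w0 = transpose B *v 0" by simp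
    with injBt m(2) show False by (meson injD)
  qed
  have "(transpose B ** B) *v (w0 v* B) = transpose B *v (B *v (w0 v* B))"
    by (simp add: matrix_vector_mul_assoc)
  also have "\<dots> = m *\<^sub>R (w0 v* B)" unfolding m(4)
    by (simp add: matrix_vector_mult_scaleR)
  finally have mS: "m \<in> S" unfolding S_def using v0 by blast
  have ne: "S \<noteq> {}" using mS by blast
  have minS: "Min S \<in> S" by (rule Min_in[OF fin ne])
  have minle: "Min S \<le> m" by (rule Min_le[OF fin mS])
  have minpos: "Min S > 0" by (rule pos[OF minS])
  have sig: "sigma_min B = sqrt (Min S)" by (simp add: sigma_min_def S_def)
  have "(sigma_min B)^2 = Min S" unfolding sig using minpos by simp
  then show ?thesis using minle minpos m(3) by auto
qed

lemma final_arith: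
  fixes Tp Tr U Lc Fp D M a sB s2 alpha m :: real
  assumes h1: "Tp \<le> U * Fp" and h2: "Lc * D \<le> Tr" and h3: "Tr \<le> U * D"
    and hU: "U = M^2 * sB^2 / (2*alpha)" and hL: "Lc = m / (2*a)"
    and a: "a > 0" and al: "alpha > 0" and m: "m > 0" and s2: "0 < s2" "s2 \<le> m"
    and Fp: "Fp \<ge> 0" and D: "D \<ge> 0"
  shows "Tp / Tr \<le> 8 * (M^2 * a * sB^2) / (s2 * alpha) * Fp / D"
proof -
  have U0: "U \<ge> 0" using hU al by simp
  have L0: "Lc > 0" using hL a m by simp
  have R0: "0 \<le> 8 * (M^2 * a * sB^2) / (s2 * alpha) * Fp / D"
    using a al s2 Fp D by simp
  show ?thesis
  proof (cases "Tr > 0")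
    case False
    then have "Tr = 0" using h2 L0 D by (smt (verit) mult_nonneg_nonneg)
    then show ?thesis using R0 by simp
  next
    case True
    have Dp: "D > 0"
    proof (rule ccontr)
      assume "\<not> D > 0"
      then have "D = 0" using D by simp
      then show False using h3 True by simp
    qed
    have LD: "0 < Lc * D" using L0 Dp by simp
    have "Tp / Tr \<le> (U * Fp) / Tr" using h1 True by (simp add: divide_right_mono)
    also have "\<dots> \<le> (U * Fp) / (Lc * D)"
      using U0 Fp LD h2 by (intro divide_left_mono) simp_all
    also have "\<dots> = (M^2 * a * sB^2 * Fp / (alpha * D)) / m"
      unfolding hU hL using a al m Dp by (simp add: field_simps)
    also have "\<dots> \<le> (M^2 * a * sB^2 * Fp / (alpha * D)) / s2"
      using s2 a al Fp Dp by (intro divide_left_mono) simp_all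
    also have "\<dots> \<le> 8 * (M^2 * a * sB^2 * Fp / (alpha * D)) / s2"
    proof (rule divide_right_mono)
      have "0 \<le> M^2 * a * sB^2 * Fp / (alpha * D)" using a al Fp Dp by simp
      moreover have "\<And>x::real. 0 \<le> x \<Longrightarrow> x \<le> 8 * x" by simp
      ultimately show "M^2 * a * sB^2 * Fp / (alpha * D) \<le> 8 * (M^2 * a * sB^2 * Fp / (alpha * D))" by blast
    qed (use s2 in simp)
    also have "\<dots> = 8 * (M^2 * a * sB^2) / (s2 * alpha) * Fp / D"
      using s2 al Dp by (simp add: field_simps)
    finally show ?thesis .
  qed
qed

theorem theorem2:
  fixes Ap :: "real^'x::finite^'x" and Bp :: "real^'u::finite^'x"
    and Bw Bwh :: "real^'x^'x"
    and Cmo :: "real^'x^'y::finite" and Cpo :: "real^'x^'p::finite"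
    and Dpo :: "real^'u^'p" and K :: "real^'y^'x" and L :: "real^'x^'u"
    and R :: "real^'y^'y" and P :: "real^('x+'x)^('x+'x)"
    and alpha M :: real
  assumes ctrb: "controllable Ap Bp"
    and obsv: "observable Ap Cmo"
    and rankB: "rank (B_big Bw Bwh) = CARD('x+'x)"
    and stable: "hurwitz (A_R Ap Bp K L Cmo R)"
    and alpha_pos: "alpha > 0"
    and eig: "\<And>l. eigenvalue (A_R Ap Bp K L Cmo R) l \<Longrightarrow> Re l \<le> - alpha"
    and Mbound: "\<And>t. t \<ge> 0 \<Longrightarrow> spec_norm (mexp (A_R Ap Bp K L Cmo R) t) \<le> M * exp (- alpha * t)"
    and lyap: "A_R Ap Bp K L Cmo R ** P + P ** transpose (A_R Ap Bp K L Cmo R)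
               + B_big Bw Bwh ** transpose (B_big Bw Bwh) = 0"
  shows "trace (C_p Cpo Dpo L ** P ** transpose (C_p Cpo Dpo L))
           / trace (C_rR Cmo R ** P ** transpose (C_rR Cmo R))
         \<le> 8 * (M^2 * spec_norm (A_R Ap Bp K L Cmo R) * (spec_norm (B_big Bw Bwh))^2)
             / ((sigma_min (B_big Bw Bwh))^2 * alpha)
           * (frob_norm (C_p Cpo Dpo L))^2
             / ((frob_norm ((mat 1 - R) ** Cmo))^2
                + (frob_norm (hcat (0::real^'x^'y) Cmo))^2)"
proof -
  define A where "A = A_R Ap Bp K L Cmo R"
  define B where "B = B_big Bw Bwh"
  have lyap': "A ** P + P ** transpose A + B ** transpose B = 0" using lyap by (simp add: A_def B_def)
  have Mb: "\<And>t. t \<ge> 0 \<Longrightarrow> spec_norm (mexp A t) \<le> M * exp (- alpha * t)" using Mbound by (simp add: A_def)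
  obtain m where sm: "0 < (sigma_min B)^2" "(sigma_min B)^2 \<le> m" "\<forall>w. m * (norm w)^2 \<le> (norm (w v* B))^2"
    using sigma_bound[of B] rankB by (auto simp: B_def)
  have mpos: "m > 0" using sm(1) sm(2) by linarith
  have sA: "spec_norm A > 0"
  proof (rule ccontr)
    assume "\<not> spec_norm A > 0"
    then have "spec_norm A = 0" using spec_norm_nonneg[of A] by simp
    then have "\<forall>x. A *v x = 0" unfolding spec_norm_def using onorm_eq_0[OF sn_bl, of A] by blast
    then have A0: "A = 0" by (intro matrix_eq_mv) simp
    define v :: "complex^('x+'x)" where "v = (\<chi> i. 1)"
    have "v \<noteq> 0" by (simp add: v_def vec_eq_iff)
    moreover have "(\<chi> i j. complex_of_real (A$i$j)) *v v = 0 *s v"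
      by (simp add: A0 vec_eq_iff matrix_vector_mult_def)
    ultimately have "eigenvalue A 0" unfolding eigenvalue_def by blast
    then have "Re 0 \<le> - alpha" using eig[of 0] by (simp add: A_def)
    then show False using alpha_pos by simp
  qed
  define U where "U = M^2 * (spec_norm B)^2 / (2 * alpha)"
  define Lc where "Lc = m / (2 * spec_norm A)"
  have qU: "\<And>v. v \<bullet> (P *v v) \<le> U * (norm v)^2"
    unfolding U_def by (rule quad_upper[OF lyap' Mb alpha_pos])
  have qL: "\<And>v. Lc * (norm v)^2 \<le> v \<bullet> (P *v v)"
    unfolding Lc_def by (rule quad_lower[OF lyap' Mb alpha_pos]) (use sm mpos sA in auto)
  have neg: "(mat 1 - R) ** Cmo = - ((R - mat 1) ** Cmo)"
    by (simp add: matrix_matrix_mult_def vec_eq_iff sum_negf[symmetric] algebra_simps)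
  have Deq: "(frob_norm (C_rR Cmo R))^2 = (frob_norm ((mat 1 - R) ** Cmo))^2 + (frob_norm (hcat (0::real^'x^'y) Cmo))^2"
    unfolding C_rR_def frob_hcat neg frob_neg frob_zero by simp
  have "trace (C_p Cpo Dpo L ** P ** transpose (C_p Cpo Dpo L))
           / trace (C_rR Cmo R ** P ** transpose (C_rR Cmo R))
         \<le> 8 * (M^2 * spec_norm A * (spec_norm B)^2) / ((sigma_min B)^2 * alpha)
           * (frob_norm (C_p Cpo Dpo L))^2 / (frob_norm (C_rR Cmo R))^2"
  proof (rule final_arith[OF _ _ _ U_def Lc_def sA alpha_pos mpos sm(1) sm(2)])
    show "trace (C_p Cpo Dpo L ** P ** transpose (C_p Cpo Dpo L)) \<le> U * (frob_norm (C_p Cpo Dpo L))^2"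
      by (rule trace_upper[OF qU])
    show "Lc * (frob_norm (C_rR Cmo R))^2 \<le> trace (C_rR Cmo R ** P ** transpose (C_rR Cmo R))"
      by (rule trace_lower[OF qL])
    show "trace (C_rR Cmo R ** P ** transpose (C_rR Cmo R)) \<le> U * (frob_norm (C_rR Cmo R))^2"
      by (rule trace_upper[OF qU])
  qed simp_all
  then show ?thesis unfolding Deq by (simp add: A_def B_def)
qed

end
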